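(* Let $K$ be any field, $n\ge 3$, $V$ an $n$-dimensional $K$-vector space, and let $S=\{t_\alpha=1+v_\alpha\otimes\phi_\alpha:\alpha\in I\}\subseteq SL(V)$ be a set of transvections. Then $S$ generates an irreducible subgroup of $SL(V)$ if and only if $S$ satisfies both of the following: (P1) $\langle v_\alpha:\alpha\in I\rangle=V$ and $\langle\phi_\alpha:\alpha\in I\rangle=V^*$; (P2) the transvection graph $\Gamma(S)$ is strongly connected.
   Context: A transvection is $1+d\otimes\phi\in SL(V)$ acting by $x\mapsto x+\phi(x)d$, $0\ne d\in V$, $0\neq\phi\in V^*$, $\phi(d)=0$. For a set $S$ of transvections, $\Gamma(S)$ is the directed graph with vertex set $S\setminus\{1\}$ and a directed edge from $1+d_1\otimes\phi_1$ to $1+d_2\otimes\phi_2$ iff $\phi_2(d_1)\neq 0$. *)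

theory Defs
  imports "HOL-Analysis.Analysis"
begin

text \<open>V = K^n is modelled as 'a ^ 'n (with 'a a field, n = CARD('n)).
  The dual space V* is identified with 'a ^ 'n via the standard dual basis:
  a coordinate vector f denotes the functional x |-> sum_i f$i * x$i.\<close>

definition dual_app :: "'a::field ^ 'n \<Rightarrow> 'a ^ 'n \<Rightarrow> 'a" where
  "dual_app f x = (\<Sum>i\<in>UNIV. f $ i * x $ i)"

definition transv :: "'a::field ^ 'n \<Rightarrow> 'a ^ 'n \<Rightarrow> ('a ^ 'n \<Rightarrow> 'a ^ 'n)" where
  "transv d f = (\<lambda>x. x + dual_app f x *s d)"

definition is_transv_rep :: "'a::field ^ 'n \<Rightarrow> 'a ^ 'n \<Rightarrow> bool" where
  "is_transv_rep d f \<longleftrightarrow> d \<noteq> 0 \<and> f \<noteq> 0 \<and> dual_app f d = 0"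

definition tgraph_edges :: "('a::field ^ 'n \<Rightarrow> 'a ^ 'n) set \<Rightarrow> (('a ^ 'n \<Rightarrow> 'a ^ 'n) \<times> ('a ^ 'n \<Rightarrow> 'a ^ 'n)) set" where
  "tgraph_edges S = {(t1, t2). t1 \<in> S - {id} \<and> t2 \<in> S - {id} \<and>
     (\<exists>d1 f1 d2 f2. is_transv_rep d1 f1 \<and> is_transv_rep d2 f2 \<and>
        t1 = transv d1 f1 \<and> t2 = transv d2 f2 \<and> dual_app f2 d1 \<noteq> 0)}"

definition tgraph_strongly_connected :: "('a::field ^ 'n \<Rightarrow> 'a ^ 'n) set \<Rightarrow> bool" where
  "tgraph_strongly_connected S \<longleftrightarrow>
     (\<forall>u \<in> S - {id}. \<forall>w \<in> S - {id}. (u, w) \<in> (tgraph_edges S)\<^sup>*)"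

inductive_set gen_group :: "('b \<Rightarrow> 'b) set \<Rightarrow> ('b \<Rightarrow> 'b) set" for S where
  gen_id: "id \<in> gen_group S"
| gen_mult: "s \<in> S \<Longrightarrow> g \<in> gen_group S \<Longrightarrow> s \<circ> g \<in> gen_group S"
| gen_inv: "s \<in> S \<Longrightarrow> g \<in> gen_group S \<Longrightarrow> inv s \<circ> g \<in> gen_group S"

definition irreducible_group :: "('a::field ^ 'n \<Rightarrow> 'a ^ 'n) set \<Rightarrow> bool" where
  "irreducible_group G \<longleftrightarrow>
     (\<forall>W. vec.subspace W \<and> (\<forall>g\<in>G. g ` W \<subseteq> W) \<longrightarrow> W = {0} \<or> W = UNIV)"

end

theory Submission
  imports Defs
begin

lemma dual_app_add2: "dual_app f (x + y) = dual_app f x + dual_app f y"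
  by (simp add: dual_app_def sum.distrib algebra_simps)

lemma dual_app_scale2: "dual_app f (c *s x) = c * dual_app f x"
  by (simp add: dual_app_def sum_distrib_left algebra_simps)

lemma dual_app_add1: "dual_app (f + g) x = dual_app f x + dual_app g x"
  by (simp add: dual_app_def sum.distrib algebra_simps)

lemma dual_app_scale1: "dual_app (c *s f) x = c * dual_app f x"
  by (simp add: dual_app_def sum_distrib_left algebra_simps)

lemma dual_app_zero1 [simp]: "dual_app 0 x = 0"
  by (simp add: dual_app_def)

lemma dual_app_zero2 [simp]: "dual_app f 0 = 0"
  by (simp add: dual_app_def)

lemma dual_app_axis: "dual_app f (axis i 1) = f $ i"
  by (simp add: dual_app_def axis_def if_distrib cong: if_cong)

lemma dual_app_comm: "dual_app f x = dual_app x f"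
  by (simp add: dual_app_def mult.commute)

lemma dual_app_diff2: "dual_app f (x - y) = dual_app f x - dual_app f y"
  by (simp add: dual_app_def sum_subtractf algebra_simps)

lemma dual_app_nonzero:
  assumes "f \<noteq> 0" shows "\<exists>y. dual_app f y \<noteq> 0"
proof -
  from assms obtain i where "f $ i \<noteq> 0" by (metis vec_eq_iff zero_index)
  then show ?thesis using dual_app_axis by metis
qed

lemma annih_zero:
  assumes "\<forall>f::'a::field^'n. dual_app f x = 0" shows "x = 0"
proof -
  have "x $ i = 0" for i
    using assms[rule_format, of "axis i 1"] by (simp add: dual_app_comm dual_app_axis)
  then show ?thesis by (simp add: vec_eq_iff)
qed

lemma subspace_ker2: "vec.subspace {x. dual_app f x = 0}"
  by (auto simp: vec.subspace_def dual_app_add2 dual_app_scale2)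

lemma subspace_ker1: "vec.subspace {f. dual_app f x = 0}"
  by (auto simp: vec.subspace_def dual_app_add1 dual_app_scale1)

lemma span_ker2:
  assumes "\<forall>g\<in>G. dual_app f g = 0" "x \<in> vec.span G" shows "dual_app f x = 0"
proof -
  have "vec.span G \<subseteq> {x. dual_app f x = 0}"
    using assms(1) by (intro vec.span_minimal subspace_ker2) auto
  then show ?thesis using assms(2) by auto
qed

lemma span_ker1:
  assumes "\<forall>g\<in>G. dual_app g x = 0" "f \<in> vec.span G" shows "dual_app f x = 0"
proof -
  have "vec.span G \<subseteq> {f. dual_app f x = 0}"
    using assms(1) by (intro vec.span_minimal subspace_ker1) auto
  then show ?thesis using assms(2) by auto
qed

lemma subspace_unscale:
  assumes "vec.subspace W" "c \<noteq> 0" "c *s d \<in> W" shows "d \<in> W"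
proof -
  have "inverse c *s (c *s d) \<in> W" using assms vec.subspace_scale by blast
  then show ?thesis using assms(2) by (simp add: vector_smult_assoc)
qed

lemma transv_inv:
  assumes "dual_app f d = 0"
  shows "inv (transv d f) = transv (-d) f"
proof (rule inv_unique_comp)
  show "transv d f \<circ> transv (- d) f = id"
    using assms by (auto simp: transv_def dual_app_add2 dual_app_diff2 dual_app_scale2 fun_eq_iff)
  show "transv (- d) f \<circ> transv d f = id"
    using assms by (auto simp: transv_def dual_app_add2 dual_app_diff2 dual_app_scale2 fun_eq_iff)
qed

lemma transv_invariant:
  assumes "vec.subspace W" "\<forall>x\<in>W. dual_app f x \<noteq> 0 \<longrightarrow> d \<in> W"
  shows "transv d f ` W \<subseteq> W"
proof
  fix y assume "y \<in> transv d f ` W"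
  then obtain x where x: "x \<in> W" "y = x + dual_app f x *s d" by (auto simp: transv_def)
  show "y \<in> W"
  proof (cases "dual_app f x = 0")
    case True then show ?thesis using x by simp
  next
    case False
    then have "d \<in> W" using assms x by auto
    then show ?thesis using x assms(1) vec.subspace_add vec.subspace_scale by blast
  qed
qed

lemma gen_group_invariant:
  assumes "\<forall>s\<in>S. s ` W \<subseteq> W \<and> inv s ` W \<subseteq> W" "g \<in> gen_group S"
  shows "g ` W \<subseteq> W"
  using assms(2)
proof induction
  case gen_id then show ?case by simp
next
  case (gen_mult s g) then show ?case using assms(1) by (auto simp: image_comp[symmetric])
next
  case (gen_inv s g)
  then have "inv s ` W \<subseteq> W" using assms(1) by blast
  moreover have "(inv s \<circ> g) ` W = inv s ` (g ` W)" by (simp add: image_comp)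
  ultimately show ?case using gen_inv.IH by (metis image_mono order_trans)
qed

lemma transv_not_id:
  assumes "is_transv_rep d f" shows "transv d f \<noteq> id"
proof
  assume h: "transv d f = id"
  obtain y where y: "dual_app f y \<noteq> 0" using assms dual_app_nonzero unfolding is_transv_rep_def by blast
  have "transv d f y = y" using h by simp
  then have "dual_app f y *s d = 0" by (simp add: transv_def)
  then show False using y assms unfolding is_transv_rep_def by simp
qed

lemma duality:
  fixes P :: "('a::field^'n) set"
  assumes "\<forall>x. (\<forall>p\<in>vec.span P. dual_app p x = 0) \<longrightarrow> x = 0"
  shows "vec.span P = UNIV"
proof -
  obtain B where B: "B \<subseteq> vec.span P" "vec.independent B" "vec.span P \<subseteq> vec.span B"
    "card B = vec.dim (vec.span P)"
    using vec.basis_exists by blast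
  have fB: "finite B" using B(2) vec.finiteI_independent by blast
  have "card B \<le> CARD('n)"
    using B(4) vec.dim_subset_UNIV[of "vec.span P"] by (simp add: vec.dimension_def card_cart_basis)
  then obtain h :: "'a^'n \<Rightarrow> 'n" where h: "inj_on h B"
    using card_le_inj[of B "UNIV :: 'n set"] fB by auto
  define r where "r j = (if j \<in> h ` B then inv_into B h j else 0)" for j
  have rP: "r j \<in> vec.span P" for j
    using B(1) h by (auto simp: r_def inv_into_into vec.span_zero)
  have Br: "B \<subseteq> range r"
  proof
    fix b assume "b \<in> B"
    then have "r (h b) = b" using h by (auto simp: r_def)
    then show "b \<in> range r" by (metis rangeI)
  qed
  define A :: "'a^'n^'n" where "A = (\<chi> i. r i)"
  have rowsA: "rows A = range r" by (auto simp: rows_def row_def A_def)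
  have "\<forall>x. A *v x = 0 \<longrightarrow> x = 0"
  proof (intro allI impI)
    fix x assume Ax: "A *v x = 0"
    have "dual_app (r i) x = 0" for i
    proof -
      have "(A *v x) $ i = 0" using Ax by simp
      then show ?thesis by (simp add: matrix_vector_mult_def A_def dual_app_def)
    qed
    then have "\<forall>g\<in>B. dual_app g x = 0" using Br by auto
    then have "\<forall>p\<in>vec.span B. dual_app p x = 0" using span_ker1 by blast
    then have "\<forall>p\<in>vec.span P. dual_app p x = 0" using B(3) by auto
    then show "x = 0" using assms by blast
  qed
  then have "vec.span (rows A) = UNIV"
    using matrix_left_invertible_ker matrix_left_invertible_span_rows_gen by blast
  moreover have "vec.span (rows A) \<subseteq> vec.span P"
    unfolding rowsA using rP by (intro vec.span_minimal) (auto simp: vec.subspace_span)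
  ultimately show ?thesis by auto
qed

theorem theorem5p2:
  fixes I :: "'i set"
    and v :: "'i \<Rightarrow> 'a::field ^ 'n"
    and phi :: "'i \<Rightarrow> 'a ^ 'n"
  assumes n3: "CARD('n) \<ge> 3"
    and rep: "\<forall>\<alpha>\<in>I. is_transv_rep (v \<alpha>) (phi \<alpha>)"
  shows "irreducible_group (gen_group ((\<lambda>\<alpha>. transv (v \<alpha>) (phi \<alpha>)) ` I))
     \<longleftrightarrow> (vec.span (v ` I) = UNIV \<and> vec.span (phi ` I) = UNIV)
         \<and> tgraph_strongly_connected ((\<lambda>\<alpha>. transv (v \<alpha>) (phi \<alpha>)) ` I)"
proof -
  define t where "t \<alpha> = transv (v \<alpha>) (phi \<alpha>)" for \<alpha>
  define S where "S = t ` I"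
  have S_eq: "(\<lambda>\<alpha>. transv (v \<alpha>) (phi \<alpha>)) ` I = S" by (simp add: S_def t_def)
  have vnz: "v \<alpha> \<noteq> 0" and phinz: "phi \<alpha> \<noteq> 0" and pv: "dual_app (phi \<alpha>) (v \<alpha>) = 0"
    if "\<alpha> \<in> I" for \<alpha> using rep that by (auto simp: is_transv_rep_def)
  have tnid: "t \<alpha> \<in> S - {id}" if "\<alpha> \<in> I" for \<alpha>
    using rep that transv_not_id by (auto simp: S_def t_def)
  have diff: "t \<alpha> y - y = dual_app (phi \<alpha>) y *s v \<alpha>" for \<alpha> y
    by (simp add: t_def transv_def)
  have tG: "t \<alpha> \<in> gen_group S" if "\<alpha> \<in> I" for \<alpha>
    using gen_mult[OF _ gen_id, of "t \<alpha>" S] that by (simp add: S_def)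
  have invG: "\<forall>g\<in>gen_group S. g ` W \<subseteq> W"
    if W: "vec.subspace W" "\<forall>\<alpha>\<in>I. \<forall>x\<in>W. dual_app (phi \<alpha>) x \<noteq> 0 \<longrightarrow> v \<alpha> \<in> W" for W
  proof
    fix g assume "g \<in> gen_group S"
    moreover have "\<forall>s\<in>S. s ` W \<subseteq> W \<and> inv s ` W \<subseteq> W"
    proof
      fix s assume "s \<in> S"
      then obtain \<alpha> where a: "\<alpha> \<in> I" "s = t \<alpha>" by (auto simp: S_def)
      have "s ` W \<subseteq> W" using transv_invariant[OF W(1)] W(2) a by (simp add: t_def)
      moreover have "inv s = transv (- v \<alpha>) (phi \<alpha>)" using transv_inv[OF pv[OF a(1)]] a(2) by (simp add: t_def)
      moreover have "transv (- v \<alpha>) (phi \<alpha>) ` W \<subseteq> W"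
        using transv_invariant[OF W(1)] W a vec.subspace_neg by metis
      ultimately show "s ` W \<subseteq> W \<and> inv s ` W \<subseteq> W" by simp
    qed
    ultimately show "g ` W \<subseteq> W" using gen_group_invariant by blast
  qed
  have "irreducible_group (gen_group S) \<longleftrightarrow>
     (vec.span (v ` I) = UNIV \<and> vec.span (phi ` I) = UNIV) \<and> tgraph_strongly_connected S"
  proof
    assume irr: "irreducible_group (gen_group S)"
    have key: "W = {0} \<or> W = UNIV"
      if W: "vec.subspace W" "\<forall>\<alpha>\<in>I. \<forall>x\<in>W. dual_app (phi \<alpha>) x \<noteq> 0 \<longrightarrow> v \<alpha> \<in> W" for W
      using irr invG[OF W] W(1) unfolding irreducible_group_def by blast
    have Ine: "I \<noteq> {}"
    proof
      assume I0: "I = {}"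
      obtain i :: 'n where True by blast
      obtain j :: 'n where ij: "j \<noteq> i"
      proof (rule ccontr)
        assume "\<not> thesis"
        then have "UNIV = {i}" using that by blast
        then have "CARD('n) = card {i}" by (rule arg_cong[where f=card])
        then have "CARD('n) = 1" by simp
        then show False using n3 by simp
      qed
      let ?W = "vec.span {axis i (1::'a)}"
      have "?W = {0} \<or> ?W = UNIV" using key[of ?W] I0 by (simp add: vec.subspace_span)
      moreover have "axis i 1 \<in> ?W" by (simp add: vec.span_base)
      moreover have "axis i (1::'a) \<noteq> 0" by (simp add: axis_eq_0_iff)
      moreover have "axis j (1::'a) \<notin> ?W"
      proof
        assume "axis j (1::'a) \<in> ?W"
        then obtain c where "axis j 1 = c *s axis i (1::'a)" by (auto simp: vec.span_singleton)
        then have "axis j (1::'a) $ j = (c *s axis i 1) $ j" by simp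
        then show False using ij by (simp add: axis_def)
      qed
      ultimately show False by (metis UNIV_I singletonD)
    qed
    then obtain \<alpha>0 where a0: "\<alpha>0 \<in> I" by blast
    have spv: "vec.span (v ` I) = UNIV"
    proof -
      have "vec.span (v ` I) = {0} \<or> vec.span (v ` I) = UNIV"
        by (rule key) (auto simp: vec.subspace_span vec.span_base)
      moreover have "v \<alpha>0 \<in> vec.span (v ` I)" using a0 by (simp add: vec.span_base)
      ultimately show ?thesis using vnz[OF a0] by auto
    qed
    define U where "U = {x. \<forall>\<alpha>\<in>I. dual_app (phi \<alpha>) x = 0}"
    have subU: "vec.subspace U"
      by (auto simp: U_def vec.subspace_def dual_app_add2 dual_app_scale2)
    have "U = {0} \<or> U = UNIV" using key[OF subU] by (auto simp: U_def)
    moreover have "U \<noteq> UNIV"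
    proof
      assume "U = UNIV"
      obtain y where "dual_app (phi \<alpha>0) y \<noteq> 0" using dual_app_nonzero phinz a0 by blast
      then show False using \<open>U = UNIV\<close> a0 by (auto simp: U_def)
    qed
    ultimately have U0: "U = {0}" by blast
    have spphi: "vec.span (phi ` I) = UNIV"
    proof (rule duality, intro allI impI)
      fix x assume "\<forall>p\<in>vec.span (phi ` I). dual_app p x = 0"
      then have "x \<in> U" by (auto simp: U_def vec.span_base)
      then show "x = 0" using U0 by auto
    qed
    have sc: "tgraph_strongly_connected S"
    proof (rule ccontr)
      assume "\<not> tgraph_strongly_connected S"
      then obtain u w where uw: "u \<in> S - {id}" "w \<in> S - {id}" "(u, w) \<notin> (tgraph_edges S)\<^sup>*"
        unfolding tgraph_strongly_connected_def by blast
      define R where "R = {s. (u, s) \<in> (tgraph_edges S)\<^sup>*}"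
      define G where "G = {v \<alpha> | \<alpha>. \<alpha> \<in> I \<and> t \<alpha> \<in> R}"
      have edge: "(t \<alpha>, t \<beta>) \<in> tgraph_edges S"
        if "\<alpha> \<in> I" "\<beta> \<in> I" "dual_app (phi \<beta>) (v \<alpha>) \<noteq> 0" for \<alpha> \<beta>
        using that tnid rep unfolding tgraph_edges_def t_def by blast
      have Rstep: "t \<beta> \<in> R" if "\<alpha> \<in> I" "\<beta> \<in> I" "t \<alpha> \<in> R" "dual_app (phi \<beta>) (v \<alpha>) \<noteq> 0" for \<alpha> \<beta>
        proof -
        have "(u, t \<alpha>) \<in> (tgraph_edges S)\<^sup>*" using that(3) by (simp add: R_def)
        from rtrancl_into_rtrancl[OF this edge[OF that(1,2,4)]] show ?thesis by (simp add: R_def)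
      qed
      have "vec.span G = {0} \<or> vec.span G = UNIV"
      proof (rule key)
        show "vec.subspace (vec.span G)" by (simp add: vec.subspace_span)
        show "\<forall>\<beta>\<in>I. \<forall>x\<in>vec.span G. dual_app (phi \<beta>) x \<noteq> 0 \<longrightarrow> v \<beta> \<in> vec.span G"
        proof (intro ballI impI)
          fix \<beta> x assume b: "\<beta> \<in> I" "x \<in> vec.span G" "dual_app (phi \<beta>) x \<noteq> 0"
          then obtain g where "g \<in> G" "dual_app (phi \<beta>) g \<noteq> 0" using span_ker2 by blast
          then obtain \<alpha> where "\<alpha> \<in> I" "t \<alpha> \<in> R" "dual_app (phi \<beta>) (v \<alpha>) \<noteq> 0"
            by (auto simp: G_def)
          then have "t \<beta> \<in> R" using Rstep b by blast
          then show "v \<beta> \<in> vec.span G" using b by (auto simp: G_def intro: vec.span_base)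
        qed
      qed
      moreover have "vec.span G \<noteq> {0}"
      proof -
        obtain \<alpha> where "\<alpha> \<in> I" "u = t \<alpha>" using uw by (auto simp: S_def)
        then have "v \<alpha> \<in> vec.span G" by (auto simp: G_def R_def intro!: vec.span_base)
        then show ?thesis using vnz \<open>\<alpha> \<in> I\<close> by auto
      qed
      moreover have "vec.span G \<noteq> UNIV"
      proof
        assume full: "vec.span G = UNIV"
        obtain \<gamma> where g: "\<gamma> \<in> I" "w = t \<gamma>" using uw by (auto simp: S_def)
        have "\<forall>x\<in>G. dual_app (phi \<gamma>) x = 0"
        proof
          fix x assume "x \<in> G"
          then obtain \<alpha> where "\<alpha> \<in> I" "t \<alpha> \<in> R" "x = v \<alpha>" by (auto simp: G_def)
          then show "dual_app (phi \<gamma>) x = 0" using Rstep[of \<alpha> \<gamma>] g uw by (auto simp: R_def)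
        qed
        then have "\<forall>y. dual_app (phi \<gamma>) y = 0" using span_ker2 full by blast
        then show False using dual_app_nonzero phinz g by blast
      qed
      ultimately show False by blast
    qed
    show "(vec.span (v ` I) = UNIV \<and> vec.span (phi ` I) = UNIV) \<and> tgraph_strongly_connected S"
      using spv spphi sc by blast
  next
    assume "(vec.span (v ` I) = UNIV \<and> vec.span (phi ` I) = UNIV) \<and> tgraph_strongly_connected S"
    then have spv: "vec.span (v ` I) = UNIV" and spphi: "vec.span (phi ` I) = UNIV"
      and sc: "tgraph_strongly_connected S" by auto
    show "irreducible_group (gen_group S)"
      unfolding irreducible_group_def
    proof (intro allI impI)
      fix W assume W: "vec.subspace W \<and> (\<forall>g\<in>gen_group S. g ` W \<subseteq> W)"
      show "W = {0} \<or> W = UNIV"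
      proof (cases "W = {0}")
        case True then show ?thesis by simp
      next
        case False
        then obtain x where x: "x \<in> W" "x \<noteq> 0" using W vec.subspace_0 by blast
        have sub: "vec.subspace W" using W by blast
        have inv: "s ` W \<subseteq> W" if "s \<in> S" for s
          using that W gen_mult[OF that gen_id] by auto
        have vin: "v \<alpha> \<in> W" if "\<alpha> \<in> I" "y \<in> W" "dual_app (phi \<alpha>) y \<noteq> 0" for \<alpha> y
        proof -
          have "t \<alpha> y \<in> W" using inv[of "t \<alpha>"] that by (auto simp: S_def)
          then have "t \<alpha> y - y \<in> W" using that sub vec.subspace_diff by blast
          then show ?thesis using diff subspace_unscale[OF sub] that by metis
        qed
        obtain \<alpha> where a: "\<alpha> \<in> I" "dual_app (phi \<alpha>) x \<noteq> 0"
        proof (rule ccontr)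
          assume "\<not> thesis"
          then have "\<forall>g\<in>phi ` I. dual_app g x = 0" using that by auto
          then have "\<forall>f. dual_app f x = 0" using span_ker1 spphi by blast
          then show False using annih_zero x by blast
        qed
        define P where "P s \<longleftrightarrow> (\<forall>y. s y - y \<in> W)" for s :: "'a^'n \<Rightarrow> 'a^'n"
        have Pa: "P (t \<alpha>)" using vin[OF a(1) x(1) a(2)] sub
          by (auto simp: P_def diff intro: vec.subspace_scale)
        have Pstep: "P s'" if "(s, s') \<in> (tgraph_edges S)\<^sup>*" "P s" for s s'
          using that
        proof induction
          case base then show ?case .
        next
          case (step y z)
          then have Py: "P y" by blast
          from step(2) obtain d1 f1 d2 f2 where e: "y \<in> S" "z \<in> S" "is_transv_rep d1 f1"
            "is_transv_rep d2 f2" "y = transv d1 f1" "z = transv d2 f2" "dual_app f2 d1 \<noteq> 0"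
            unfolding tgraph_edges_def by blast
          obtain y0 where y0: "dual_app f1 y0 \<noteq> 0"
            using e(3) dual_app_nonzero unfolding is_transv_rep_def by blast
          have "y y0 - y0 \<in> W" using Py by (simp add: P_def)
          then have "dual_app f1 y0 *s d1 \<in> W" using e(5) by (simp add: transv_def)
          then have d1: "d1 \<in> W" using subspace_unscale[OF sub] y0 by blast
          then have "z d1 \<in> W" using inv[OF e(2)] by blast
          then have "z d1 - d1 \<in> W" using d1 sub vec.subspace_diff by blast
          then have "dual_app f2 d1 *s d2 \<in> W" using e(6) by (simp add: transv_def)
          then have d2: "d2 \<in> W" using subspace_unscale[OF sub] e(7) by blast
          show ?case unfolding P_def
          proof
            fix y' show "z y' - y' \<in> W"
              using e(6) d2 sub vec.subspace_scale by (simp add: transv_def)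
          qed
        qed
        have "v \<beta> \<in> W" if b: "\<beta> \<in> I" for \<beta>
        proof -
          have "(t \<alpha>, t \<beta>) \<in> (tgraph_edges S)\<^sup>*"
            using sc tnid a(1) b unfolding tgraph_strongly_connected_def by blast
          then have "P (t \<beta>)" using Pstep Pa by blast
          obtain y0 where y0: "dual_app (phi \<beta>) y0 \<noteq> 0" using dual_app_nonzero phinz b by blast
          have "t \<beta> y0 - y0 \<in> W" using \<open>P (t \<beta>)\<close> by (simp add: P_def)
          then show ?thesis using diff subspace_unscale[OF sub] y0 by metis
        qed
        then have "vec.span (v ` I) \<subseteq> W" using sub by (intro vec.span_minimal) auto
        then show ?thesis using spv by auto
      qed
    qed
  qed
  then show ?thesis unfolding S_eq .
qed

end
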